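(* Let $G$ be a non-regular simple graph on $n$ vertices, and let $u,v$ be vertices of $G$ with $d_G(u)<d_G(v)$. Let $R:=V(G)\setminus\{u,v\}$. If $F_k(G)$ is regular for some integer $k$ with $2\le k\le n-2$, then $d_R(u)=0$, i.e. $u$ has no neighbor in $R$.
   Context: For a simple graph $G=(V,E)$ on $n$ vertices and an integer $1\le k<n$, the $k$-token graph $F_k(G)$ is the graph whose vertices are all $k$-element subsets of $V$, two such subsets $A,B$ being adjacent whenever their symmetric difference $A\triangle B$ is a pair $\{a,b\}$ with $a$ adjacent to $b$ in $G$. For $X\subseteq V$ and $x\in V$, $d_X(x)$ is the number of neighbors of $x$ in $X$; $d_G(x)$ is the degree of $x$ in $G$. *)

theory Defs
  imports Main
begin

definition simple_graph :: "'a set \<Rightarrow> ('a \<Rightarrow> 'a \<Rightarrow> bool) \<Rightarrow> bool" where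
  "simple_graph V E \<longleftrightarrow> finite V \<and> (\<forall>x y. E x y \<longrightarrow> x \<in> V \<and> y \<in> V)
     \<and> (\<forall>x y. E x y \<longrightarrow> E y x) \<and> (\<forall>x. \<not> E x x)"

definition deg_in :: "('a \<Rightarrow> 'a \<Rightarrow> bool) \<Rightarrow> 'a set \<Rightarrow> 'a \<Rightarrow> nat" where
  "deg_in E X x = card {y \<in> X. E x y}"

definition degree :: "'a set \<Rightarrow> ('a \<Rightarrow> 'a \<Rightarrow> bool) \<Rightarrow> 'a \<Rightarrow> nat" where
  "degree V E x = deg_in E V x"

definition regular :: "'a set \<Rightarrow> ('a \<Rightarrow> 'a \<Rightarrow> bool) \<Rightarrow> bool" where
  "regular V E \<longleftrightarrow> (\<exists>r. \<forall>x\<in>V. degree V E x = r)"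

definition token_vertices :: "'a set \<Rightarrow> nat \<Rightarrow> 'a set set" where
  "token_vertices V k = {A. A \<subseteq> V \<and> card A = k}"

definition token_adj :: "('a \<Rightarrow> 'a \<Rightarrow> bool) \<Rightarrow> 'a set \<Rightarrow> 'a set \<Rightarrow> bool" where
  "token_adj E A B \<longleftrightarrow> (\<exists>a b. A - B \<union> (B - A) = {a, b} \<and> E a b)"

end

theory Submission imports Defs begin

lemma swap_form:
  assumes "finite A" "finite B" "card A = card B" "A - B \<union> (B - A) = {a, b}" "a \<noteq> b"
  shows "(A - B = {a} \<and> B - A = {b}) \<or> (A - B = {b} \<and> B - A = {a})"
proof -
  have fin: "finite (A \<inter> B)" using assms by auto
  have c1: "card (A - B) = card (B - A)"
    using card_Diff_subset_Int[OF fin] card_Diff_subset_Int[of B A] fin assms(3)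
    by (simp add: Int_commute)
  have disj: "(A - B) \<inter> (B - A) = {}" by auto
  have "card (A - B) + card (B - A) = 2"
    using card_Un_disjoint[of "A - B" "B - A"] assms disj by simp
  hence c: "card (A - B) = 1" "card (B - A) = 1" using c1 by auto
  then obtain x y where xy: "A - B = {x}" "B - A = {y}" by (meson card_1_singletonE)
  hence "{x, y} = {a, b}" using assms(4) by auto
  thus ?thesis using xy assms(5) by (auto simp: doubleton_eq_iff)
qed

lemma tok_deg:
  assumes g: "simple_graph V E" and A: "A \<subseteq> V" "card A = k"
  shows "card {B \<in> token_vertices V k. token_adj E A B}
       = card (SIGMA a:A. {b \<in> V - A. E a b})"
proof -
  have finV: "finite V" using g by (simp add: simple_graph_def)
  have sym: "\<And>x y. E x y \<Longrightarrow> E y x" and irr: "\<And>x. \<not> E x x"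
    using g by (auto simp: simple_graph_def)
  have finA: "finite A" using A finV finite_subset by blast
  let ?f = "\<lambda>(a,b). insert b (A - {a})"
  have inj: "inj_on ?f (SIGMA a:A. {b \<in> V - A. E a b})"
  proof (rule inj_onI, clarify)
    fix x y xa ya assume h: "x \<in> A" "xa \<in> A" "y \<notin> A" "ya \<notin> A"
      "insert y (A - {x}) = insert ya (A - {xa})"
    have "x \<notin> insert y (A - {x})" using h by auto
    hence "x \<notin> insert ya (A - {xa})" by (metis h(5))
    hence x: "x = xa" using h(1) by blast
    have "y \<in> insert ya (A - {xa})" using h(5) by blast
    thus "x = xa \<and> y = ya" using x h by auto
  qed
  have img: "?f ` (SIGMA a:A. {b \<in> V - A. E a b}) = {B \<in> token_vertices V k. token_adj E A B}"
  proof
    show "?f ` (SIGMA a:A. {b \<in> V - A. E a b}) \<subseteq> {B \<in> token_vertices V k. token_adj E A B}"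
    proof (rule image_subsetI)
      fix p assume "p \<in> (SIGMA a:A. {b \<in> V - A. E a b})"
      then obtain a b where p: "p = (a, b)" and ab: "a \<in> A" "b \<in> V" "b \<notin> A" "E a b" by auto
      have "k > 0" using ab A finA card_gt_0_iff by blast
      hence "card (insert b (A - {a})) = k"
        using ab A finA by (simp add: card_Diff_singleton)
      moreover have "A - insert b (A - {a}) \<union> (insert b (A - {a}) - A) = {a, b}"
        using ab by auto
      ultimately show "?f p \<in> {B \<in> token_vertices V k. token_adj E A B}"
        using ab A p unfolding token_vertices_def token_adj_def by auto
    qed
  next
    show "{B \<in> token_vertices V k. token_adj E A B} \<subseteq> ?f ` (SIGMA a:A. {b \<in> V - A. E a b})"
    proof clarify
      fix B assume B: "B \<in> token_vertices V k" "token_adj E A B"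
      then obtain a b where ab: "A - B \<union> (B - A) = {a, b}" "E a b" unfolding token_adj_def by blast
      have BV: "B \<subseteq> V" "card B = k" using B(1) by (auto simp: token_vertices_def)
      have finB: "finite B" using BV finV finite_subset by blast
      have "a \<noteq> b" using ab irr by auto
      from swap_form[OF finA finB _ ab(1) this] A BV
      have "(A - B = {a} \<and> B - A = {b}) \<or> (A - B = {b} \<and> B - A = {a})" by simp
      thus "B \<in> ?f ` (SIGMA a:A. {b \<in> V - A. E a b})"
      proof
        assume h: "A - B = {a} \<and> B - A = {b}"
        hence "B = ?f (a, b)" by auto
        moreover have "(a, b) \<in> (SIGMA a:A. {b \<in> V - A. E a b})" using h ab BV by auto
        ultimately show ?thesis by blast
      next
        assume h: "A - B = {b} \<and> B - A = {a}"
        hence "B = ?f (b, a)" by auto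
        moreover have "(b, a) \<in> (SIGMA a:A. {b \<in> V - A. E a b})" using h ab BV sym by auto
        ultimately show ?thesis by blast
      qed
    qed
  qed
  show ?thesis using card_image[OF inj] img by simp
qed


lemma cut_form:
  assumes g: "simple_graph V E" and S: "S \<subseteq> V" and uv: "u \<in> V" "v \<in> V" "u \<notin> S" "v \<notin> S" "u \<noteq> v"
  shows "int (card (SIGMA a:insert u S. {b \<in> V - insert u S. E a b}))
    = int (\<Sum>a\<in>S. card {b \<in> V - (S \<union> {u,v}). E a b}) + int (card {y\<in>S. E v y})
      + int (degree V E u) - int (card {y\<in>S. E u y})"
proof -
  have finV: "finite V" using g by (simp add: simple_graph_def)
  have sym: "\<And>x y. E x y \<Longrightarrow> E y x" and irr: "\<And>x. \<not> E x x"
    using g by (auto simp: simple_graph_def)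
  have finS: "finite S" using S finV finite_subset by blast
  have c0: "card (SIGMA a:insert u S. {b \<in> V - insert u S. E a b})
      = card {b \<in> V - insert u S. E u b} + (\<Sum>a\<in>S. card {b \<in> V - insert u S. E a b})"
    using finS finV uv by (simp add: card_SigmaI)
  have c1: "card {b \<in> V. E u b} = card {b \<in> V - insert u S. E u b} + card {y\<in>S. E u y}"
  proof -
    have "{b \<in> V. E u b} = {b \<in> V - insert u S. E u b} \<union> {y\<in>S. E u y}" using S irr by auto
    thus ?thesis using finV finS by (simp add: card_Un_disjoint[symmetric] disjoint_iff)
  qed
  have c2: "card {b \<in> V - insert u S. E a b} = card {b \<in> V - (S \<union> {u,v}). E a b} + of_bool (E a v)"
    for a
  proof (cases "E a v")
    case True
    hence "{b \<in> V - insert u S. E a b} = insert v {b \<in> V - (S \<union> {u,v}). E a b}" using uv by auto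
    thus ?thesis using finV True by simp
  next
    case False
    hence "{b \<in> V - insert u S. E a b} = {b \<in> V - (S \<union> {u,v}). E a b}" using uv by auto
    thus ?thesis using False by simp
  qed
  have c3: "(\<Sum>a\<in>S. card {b \<in> V - insert u S. E a b})
     = (\<Sum>a\<in>S. card {b \<in> V - (S \<union> {u,v}). E a b}) + card {y\<in>S. E v y}"
  proof -
    have "(\<Sum>a\<in>S. card {b \<in> V - insert u S. E a b})
      = (\<Sum>a\<in>S. card {b \<in> V - (S \<union> {u,v}). E a b}) + (\<Sum>a\<in>S. of_bool (E a v))"
      by (simp only: c2 sum.distrib)
    also have "(\<Sum>a\<in>S. (of_bool (E a v)::nat)) = card (S \<inter> {a. E a v})" using finS by simp
    also have "S \<inter> {a. E a v} = {y\<in>S. E v y}" using sym by blast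
    finally show ?thesis .
  qed
  show ?thesis using c0 c1 c3 unfolding degree_def deg_in_def by simp
qed


lemma card_ins_filter:
  assumes "finite A" "z \<notin> A"
  shows "card {y \<in> insert z A. P y} = card {y \<in> A. P y} + of_bool (P z)"
proof (cases "P z")
  case True
  hence "{y \<in> insert z A. P y} = insert z {y \<in> A. P y}" by auto
  thus ?thesis using assms True by simp
next
  case False
  hence "{y \<in> insert z A. P y} = {y \<in> A. P y}" by auto
  thus ?thesis using False by simp
qed

lemma card_swap_filter:
  assumes "finite S" "x \<in> S" "z \<notin> S"
  shows "int (card {y \<in> insert z (S - {x}). P y})
       = int (card {y \<in> S. P y}) - of_bool (P x) + of_bool (P z)"
proof -
  have a: "card {y \<in> insert z (S - {x}). P y} = card {y \<in> S - {x}. P y} + of_bool (P z)"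
    using assms by (intro card_ins_filter) auto
  have "S = insert x (S - {x})" using assms by auto
  hence b: "card {y \<in> S. P y} = card {y \<in> S - {x}. P y} + of_bool (P x)"
    using assms card_ins_filter[of "S - {x}" x P] by auto
  show ?thesis using a b by simp
qed

theorem lemma4:
  fixes V :: "'a set" and E :: "'a \<Rightarrow> 'a \<Rightarrow> bool" and u v :: 'a and k :: nat
  assumes "simple_graph V E"
    and "\<not> regular V E"
    and "u \<in> V" and "v \<in> V"
    and "degree V E u < degree V E v"
    and "2 \<le> k" and "k \<le> card V - 2"
    and "regular (token_vertices V k) (token_adj E)"
  shows "deg_in E (V - {u, v}) u = 0"
proof (rule ccontr)
  assume contra: "deg_in E (V - {u, v}) u \<noteq> 0"
  note g = assms(1)
  have finV: "finite V" using g by (simp add: simple_graph_def)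
  have sym: "\<And>x y. E x y \<Longrightarrow> E y x" and irr: "\<And>x. \<not> E x x"
    using g by (auto simp: simple_graph_def)
  have uv: "u \<noteq> v" using assms(5) by auto
  define R where "R = V - {u, v}"
  have finR: "finite R" using finV R_def by simp
  have cR: "card R = card V - 2" using R_def finV assms(3,4) uv by (simp add: card_Diff_subset)
  hence kR: "k \<le> card R" using assms(7) by simp
  obtain r where r: "\<And>A. A \<in> token_vertices V k \<Longrightarrow> degree (token_vertices V k) (token_adj E) A = r"
    using assms(8) unfolding regular_def by blast
  have K: "2 * int (card {y\<in>S. E v y}) - 2 * int (card {y\<in>S. E u y})
           = int (degree V E v) - int (degree V E u)"
    if S: "S \<subseteq> R" "card S = k - 1" for S
  proof -
    have SV: "S \<subseteq> V" "u \<notin> S" "v \<notin> S" using S R_def by auto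
    have finS: "finite S" using finR S finite_subset by blast
    have cu: "card (insert u S) = k" using SV finS S assms(6) by simp
    have cv: "card (insert v S) = k" using SV finS S assms(6) by simp
    have iu: "insert u S \<in> token_vertices V k" using cu SV assms(3) by (simp add: token_vertices_def)
    have iv: "insert v S \<in> token_vertices V k" using cv SV assms(4) by (simp add: token_vertices_def)
    have eq: "card (SIGMA a:insert u S. {b \<in> V - insert u S. E a b})
          = card (SIGMA a:insert v S. {b \<in> V - insert v S. E a b})"
      using r[OF iu] r[OF iv] tok_deg[OF g _ cu] tok_deg[OF g _ cv] SV assms(3,4)
      unfolding degree_def deg_in_def by simp
    note e1 = cut_form[OF g SV(1) assms(3) assms(4) SV(2) SV(3) uv]
    note e2 = cut_form[OF g SV(1) assms(4) assms(3) SV(3) SV(2) uv[symmetric]]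
    have "S \<union> {v, u} = S \<union> {u, v}" by auto
    thus ?thesis using e1 e2 eq by simp
  qed
  have SW: "int (of_bool (E v x)) - of_bool (E u x) = int (of_bool (E v z)) - of_bool (E u z)"
    if S: "S \<subseteq> R" "card S = k - 1" "x \<in> S" "z \<in> R" "z \<notin> S" for S x z
  proof -
    have finS: "finite S" using finR S finite_subset by blast
    have "card S > 0" using S finS card_gt_0_iff by blast
    have T: "insert z (S - {x}) \<subseteq> R" "card (insert z (S - {x})) = k - 1"
      using S finS \<open>card S > 0\<close> by (auto simp: card_Diff_singleton)
    note K1 = K[OF S(1,2)] and K2 = K[OF T]
    note s1 = card_swap_filter[OF finS S(3) S(5), of "E v"]
    note s2 = card_swap_filter[OF finS S(3) S(5), of "E u"]
    show ?thesis using K1 K2 s1 s2 by simp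
  qed
  from contra obtain x where x: "x \<in> R" "E u x"
    unfolding deg_in_def R_def by (metis (mono_tags, lifting) card.empty empty_Collect_eq)
  have "k - 2 \<le> card (R - {x})" using kR x finR by simp
  then obtain S' where S': "S' \<subseteq> R - {x}" "card S' = k - 2" "finite S'"
    by (rule obtain_subset_with_card_n)
  define S where "S = insert x S'"
  have S: "S \<subseteq> R" "card S = k - 1" "x \<in> S"
  proof -
    have "x \<notin> S'" using S' by auto
    thus "S \<subseteq> R" "card S = k - 1" "x \<in> S"
      using S' x assms(6) unfolding S_def by auto
  qed
  have finS: "finite S" using finR S finite_subset by blast
  have "card {y\<in>S. E u y} < card {y\<in>S. E v y}" using K[OF S(1,2)] assms(5) by simp
  then obtain y where y: "y \<in> S" "E v y" "\<not> E u y"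
    using card_mono[of "{y\<in>S. E u y}" "{y\<in>S. E v y}"] finS by force
  have "R - S \<noteq> {}"
  proof
    assume "R - S = {}"
    hence "R \<subseteq> S" by auto
    hence "card R \<le> card S" using finS card_mono by blast
    thus False using S kR assms(6) by simp
  qed
  then obtain z where z: "z \<in> R" "z \<notin> S" by blast
  have 1: "int (of_bool (E v x)) - of_bool (E u x) = int (of_bool (E v z)) - of_bool (E u z)"
    using SW[OF S(1,2,3) z] .
  have 2: "int (of_bool (E v y)) - of_bool (E u y) = int (of_bool (E v z)) - of_bool (E u z)"
    using SW[OF S(1,2) y(1) z] .
  show False using 1 2 x y by (cases "E v x") simp_all
qed

end
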